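(* For any signed graph $(G,\sigma)$, $\chi_c(G,\sigma)\le 2\chi_c(G)$, where $\chi_c(G)$ is the circular chromatic number of the underlying unsigned graph $G$.
   Context: A signed graph $(G,\sigma)$ is a finite graph $G$ (multiple edges allowed, no loops) with a signature $\sigma:E(G)\to\{+1,-1\}$. For real $r\ge 2$, $C^r$ is the circle of circumference $r$, $d_{C^r}(x,y)=\min\{|x-y|,r-|x-y|\}$, $\overline{x}=x+r/2\pmod r$. A circular $r$-coloring of $(G,\sigma)$ is $f:V(G)\to C^r$ with $d_{C^r}(f(u),f(v))\ge1$ for each positive edge $uv$ and $d_{C^r}(f(u),\overline{f(v)})\ge1$ for each negative edge $uv$; $\chi_c(G,\sigma)$ is the infimum of such $r\ge2$. For an unsigned graph $G$, a circular $r$-coloring requires $d_{C^r}(f(u),f(v))\ge1$ for every edge $uv$, and $\chi_c(G)$ is the infimum of such $r$. *)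

theory Defs
  imports Complex_Main
begin

text \<open>A signed multigraph: finite vertex set V, finite set of edge identifiers E,
  each edge e has endpoints ends e = (u,v) in V with u \<noteq> v (no loops; parallel
  edges allowed since distinct edge identifiers may have the same endpoints),
  and signature sigma e \<in> {1,-1}.\<close>

definition signed_graph ::
  "'v set \<Rightarrow> 'e set \<Rightarrow> ('e \<Rightarrow> 'v \<times> 'v) \<Rightarrow> ('e \<Rightarrow> int) \<Rightarrow> bool" where
  "signed_graph V E ends sigma \<longleftrightarrow> finite V \<and> finite E \<and>
     (\<forall>e\<in>E. fst (ends e) \<in> V \<and> snd (ends e) \<in> V \<and> fst (ends e) \<noteq> snd (ends e)) \<and>
     (\<forall>e\<in>E. sigma e = 1 \<or> sigma e = -1)"

text \<open>The circle C^r is represented by the interval [0,r).\<close>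

definition circ_dist :: "real \<Rightarrow> real \<Rightarrow> real \<Rightarrow> real" where
  "circ_dist r x y = min \<bar>x - y\<bar> (r - \<bar>x - y\<bar>)"

definition antipode :: "real \<Rightarrow> real \<Rightarrow> real" where
  "antipode r x = (if x + r / 2 < r then x + r / 2 else x + r / 2 - r)"

definition signed_circ_coloring ::
  "real \<Rightarrow> 'v set \<Rightarrow> 'e set \<Rightarrow> ('e \<Rightarrow> 'v \<times> 'v) \<Rightarrow> ('e \<Rightarrow> int) \<Rightarrow> ('v \<Rightarrow> real) \<Rightarrow> bool" where
  "signed_circ_coloring r V E ends sigma f \<longleftrightarrow>
     (\<forall>v\<in>V. 0 \<le> f v \<and> f v < r) \<and>
     (\<forall>e\<in>E. (sigma e = 1 \<longrightarrow> circ_dist r (f (fst (ends e))) (f (snd (ends e))) \<ge> 1) \<and>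
             (sigma e = -1 \<longrightarrow> circ_dist r (f (fst (ends e))) (antipode r (f (snd (ends e)))) \<ge> 1))"

definition signed_chi_c ::
  "'v set \<Rightarrow> 'e set \<Rightarrow> ('e \<Rightarrow> 'v \<times> 'v) \<Rightarrow> ('e \<Rightarrow> int) \<Rightarrow> real" where
  "signed_chi_c V E ends sigma =
     Inf {r. r \<ge> 2 \<and> (\<exists>f. signed_circ_coloring r V E ends sigma f)}"

definition circ_coloring ::
  "real \<Rightarrow> 'v set \<Rightarrow> 'e set \<Rightarrow> ('e \<Rightarrow> 'v \<times> 'v) \<Rightarrow> ('v \<Rightarrow> real) \<Rightarrow> bool" where
  "circ_coloring r V E ends f \<longleftrightarrow>
     (\<forall>v\<in>V. 0 \<le> f v \<and> f v < r) \<and>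
     (\<forall>e\<in>E. circ_dist r (f (fst (ends e))) (f (snd (ends e))) \<ge> 1)"

definition chi_c :: "'v set \<Rightarrow> 'e set \<Rightarrow> ('e \<Rightarrow> 'v \<times> 'v) \<Rightarrow> real" where
  "chi_c V E ends = Inf {r. r \<ge> 2 \<and> (\<exists>f. circ_coloring r V E ends f)}"

end

theory Submission
  imports Defs
begin

lemma chi_nonempty:
  assumes "signed_graph V E ends sigma"
  shows "\<exists>r. r \<ge> 2 \<and> (\<exists>f. circ_coloring r V E ends f)"
proof -
  have fin: "finite V" using assms unfolding signed_graph_def by blast
  obtain h where h: "bij_betw h V {0..<card V}" using ex_bij_betw_finite_nat[OF fin] by blast
  define r where "r = real (card V) + 2"
  define f where "f = (\<lambda>v. real (h v))"
  have rng2: "\<forall>v\<in>V. f v + 2 \<le> r"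
  proof
    fix v assume "v \<in> V"
    then have "h v < card V" using h unfolding bij_betw_def by auto
    then show "f v + 2 \<le> r" unfolding f_def r_def by simp
  qed
  have "circ_coloring r V E ends f"
    unfolding circ_coloring_def
  proof (intro conjI ballI)
    fix v assume "v \<in> V" then show "0 \<le> f v" "f v < r" using rng2 unfolding f_def by auto
  next
    fix e assume e: "e \<in> E"
    let ?a = "fst (ends e)" and ?b = "snd (ends e)"
    have ab: "?a \<in> V" "?b \<in> V" "?a \<noteq> ?b" using assms e unfolding signed_graph_def by auto
    then have "h ?a \<noteq> h ?b" using h unfolding bij_betw_def inj_on_def by blast
    then have "\<bar>f ?a - f ?b\<bar> \<ge> 1" unfolding f_def by linarith
    moreover have "f ?a \<ge> 0" "f ?b \<ge> 0" "f ?a + 2 \<le> r" "f ?b + 2 \<le> r" using ab rng2 unfolding f_def by auto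
    ultimately show "circ_dist r (f ?a) (f ?b) \<ge> 1" unfolding circ_dist_def by auto
  qed
  moreover have "r \<ge> 2" unfolding r_def by simp
  ultimately show ?thesis by blast
qed

lemma double_col:
  assumes "signed_graph V E ends sigma" "r \<ge> 2" "circ_coloring r V E ends f"
  shows "signed_circ_coloring (2*r) V E ends sigma f"
  unfolding signed_circ_coloring_def
proof (intro conjI ballI impI)
  fix v assume "v \<in> V" then show "0 \<le> f v" "f v < 2*r" using assms unfolding circ_coloring_def by auto
next
  fix e assume e: "e \<in> E"
  let ?a = "f (fst (ends e))" and ?b = "f (snd (ends e))"
  have inV: "fst (ends e) \<in> V" "snd (ends e) \<in> V" using assms(1) e unfolding signed_graph_def by auto
  then have rg: "0 \<le> ?a" "?a < r" "0 \<le> ?b" "?b < r" using assms(3) unfolding circ_coloring_def by auto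
  have d: "circ_dist r ?a ?b \<ge> 1" using assms e unfolding circ_coloring_def by auto
  then have d1: "\<bar>?a - ?b\<bar> \<ge> 1" "r - \<bar>?a - ?b\<bar> \<ge> 1" unfolding circ_dist_def by auto
  show "1 \<le> circ_dist (2 * r) ?a ?b" using d1 assms(2) rg unfolding circ_dist_def by auto
  have "antipode (2*r) ?b = ?b + r" using rg unfolding antipode_def by auto
  then show "1 \<le> circ_dist (2 * r) ?a (antipode (2 * r) ?b)"
    using d1 rg unfolding circ_dist_def by (simp add: abs_if split: if_splits)
qed

theorem lemma5:
  fixes V :: "'v set" and E :: "'e set" and ends :: "'e \<Rightarrow> 'v \<times> 'v" and sigma :: "'e \<Rightarrow> int"
  assumes "signed_graph V E ends sigma"
  shows "signed_chi_c V E ends sigma \<le> 2 * chi_c V E ends"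
proof -
  let ?S = "{r. r \<ge> 2 \<and> (\<exists>f. circ_coloring r V E ends f)}"
  let ?T = "{r. r \<ge> 2 \<and> (\<exists>f. signed_circ_coloring r V E ends sigma f)}"
  have ne: "?S \<noteq> {}" using chi_nonempty[OF assms] by blast
  have bT: "bdd_below ?T" by (rule bdd_belowI[of _ 2]) auto
  have "signed_chi_c V E ends sigma / 2 \<le> Inf ?S"
  proof (rule cInf_greatest[OF ne])
    fix r assume "r \<in> ?S"
    then obtain f where r: "r \<ge> 2" "circ_coloring r V E ends f" by blast
    have "2*r \<in> ?T" using double_col[OF assms r] r by auto
    then have "Inf ?T \<le> 2*r" by (rule cInf_lower[OF _ bT])
    then show "signed_chi_c V E ends sigma / 2 \<le> r" unfolding signed_chi_c_def by simp
  qed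
  then show ?thesis unfolding chi_c_def by simp
qed

end
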